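(* Let $n\ge2$, $F(a)=\prod_{i=1}^n(a-a_i)$ with distinct real $a_i$, and consider the superintegrable systems (integrals of degree $2n+1$) of the construction below with $\nu_n=1$ and $a>0$: $\mathcal{I}_{++}$: $x(a)=\frac a2+\frac1{\sqrt{a-a_1}}+\sum_{i=2}^n\frac{\xi_i}{\sqrt{a-a_i}}$, so that with $u=\sqrt a$, $g=(\mu^2du^2+dy^2)/u^2$, $\mu=1-\frac1{(u^2-a_1)^{3/2}}-\sum_{i=2}^n\frac{\xi_i}{(u^2-a_i)^{3/2}}$; $\mathcal{I}_{+-}$: $x(a)=\frac a2-\frac1{\sqrt{a-a_1}}-\sum_{i=2}^n\frac{\xi_i}{\sqrt{a-a_i}}$, so that $\mu=1+\frac1{(u^2-a_1)^{3/2}}+\sum_{i=2}^n\frac{\xi_i}{(u^2-a_i)^{3/2}}$. These systems (generalizing the cubic cases $\mathcal{I}_{+\pm}$ with $F=a-a_1$) are globally defined on $M\cong\mathbb{H}^2$ under the restrictions $\mathcal{I}_{++}$: $-\infty<a_i<a_1<-1$ ($i\ge2$), $\xi_i>0$, and $\frac1{|a_1|^{3/2}}+\sum_{i=2}^n\frac{\xi_i}{|a_i|^{3/2}}<1$; $\mathcal{I}_{+-}$: $-\infty<a_i<a_1<0$ ($i\ge2$), $\xi_i>0$.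
   Context: Construction (odd degree $2n+1$): $F=\sum_kA_ka^k=\prod_i(a-a_i)$, signs $\epsilon_i$, $\Delta_i=\epsilon_i(a-a_i)$, $x=\frac{\nu_n}2a+\sum_i\xi'_i\Delta_i^{-1/2}$ (here all $\epsilon_i=1$ and the coefficients $\xi'_i$ are read off from the displayed $x$) on the domain of $a>0$ where all $\Delta_i>0$; $H=\Pi^2+aP_y^2$, $\Pi=\frac a{\dot x}P_a$ (geodesic Hamiltonian of $g=\dot x^2a^{-2}da^2+a^{-1}dy^2$, $y\in\mathbb{R}$); $G=\sum_{k=0}^nA_{n-k}H^{n-k}P_y^{2k+1}$, $Q_1=\sum_{k=0}^n\tilde b_kH^{n-k}\Pi P_y^{2k}$, $Q_2=\sum_{k=0}^n\tilde c_kH^{n-k}P_y^{2k+1}$, $S_1=Q_1+yG$, $S_2=Q_2+yQ_1+\frac{y^2}2G$, with $\tilde b_k=(-1)^k(\nu_n\sigma_k+\sum_i\frac{\xi'_i}{\sqrt{\Delta_i}}\sigma^i_{k-1})$, $\tilde c_k=\frac{(-1)^{k+1}}2\{\nu_n^2a\sigma_k+2\nu_n\sum_i\frac{\xi'_i}{\sqrt{\Delta_i}}(\sigma^i_k+a\sigma^i_{k-1})+\sum_i\frac{\xi_i'^2}{\Delta_i}\sigma^i_{k-1}+\sum_{i\neq j}\frac{\xi'_i\xi'_j}{\sqrt{\Delta_i\Delta_j}}(\sigma^{ij}_{k-1}+a\sigma^{ij}_{k-2})\}$; $\sigma_k$ by $\prod_i(a-a_i)=\sum_k(-1)^k\sigma_ka^{n-k}$,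 $\sigma^i_m$ by $\prod_{l\ne i}(a-a_l)=\sum_{m=0}^{n-1}(-1)^m\sigma^i_ma^{n-1-m}$, $\sigma^i_{-1}=\sigma^i_n=0$, $\sigma^{ij}_m$ by $\prod_{l\ne i,j}(a-a_l)=\sum_{m=0}^{n-2}(-1)^m\sigma^{ij}_ma^{n-2-m}$, $\sigma^{ij}_{-2}=\sigma^{ij}_{-1}=\sigma^{ij}_{n-1}=\sigma^{ij}_n=0$. "Globally defined on $M\cong\mathbb{H}^2$": $g$ is a smooth Riemannian metric on the whole domain $M=\{u>0\}\times\mathbb{R}$, there is a smooth diffeomorphism $t=t(u)$ of $(0,\infty)$ onto $(0,\infty)$ with $g=\Phi(dt^2+dy^2)/t^2$, $\Phi$ smooth positive, and $S_1,S_2$ are smooth on $T^*M$. *)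

theory Defs
  imports "HOL-Analysis.Analysis" "HOL-Computational_Algebra.Polynomial"
begin

fun Ck_on :: "nat \<Rightarrow> 'a::euclidean_space set \<Rightarrow> ('a \<Rightarrow> real) \<Rightarrow> bool" where
  "Ck_on 0 S f = continuous_on S f"
| "Ck_on (Suc k) S f =
     (\<exists>f'. (\<forall>x\<in>S. (f has_derivative f' x) (at x)) \<and> (\<forall>i\<in>Basis. Ck_on k S (\<lambda>x. f' x i)))"

definition Cinf_on :: "'a::euclidean_space set \<Rightarrow> ('a \<Rightarrow> real) \<Rightarrow> bool" where
  "Cinf_on S f \<longleftrightarrow> (\<forall>k. Ck_on k S f)"

definition Fpoly :: "nat set \<Rightarrow> (nat \<Rightarrow> real) \<Rightarrow> real poly" where
  "Fpoly A r = (\<Prod>i\<in>A. [:- r i, 1:])"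

text \<open>sigma_k of the roots indexed by A, defined by
  prod_{i in A}(a - r i) = sum_k (-1)^k sigma_k a^(card A - k); zero for k outside 0..card A.\<close>
definition sig :: "nat set \<Rightarrow> (nat \<Rightarrow> real) \<Rightarrow> int \<Rightarrow> real" where
  "sig A r k = (if 0 \<le> k \<and> nat k \<le> card A
                then (-1) ^ nat k * coeff (Fpoly A r) (card A - nat k) else 0)"

text \<open>Construction data: degree parameter n (roots indexed by 1..n), roots r,
  coefficients c = xi', constant nu; all epsilon_i = 1, so Delta_i = a - r i.\<close>

definition xfun :: "real \<Rightarrow> nat \<Rightarrow> (nat \<Rightarrow> real) \<Rightarrow> (nat \<Rightarrow> real) \<Rightarrow> real \<Rightarrow> real" where
  "xfun \<nu> n r c a = \<nu> / 2 * a + (\<Sum>i\<in>{1..n}. c i / sqrt (a - r i))"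

definition btil :: "real \<Rightarrow> nat \<Rightarrow> (nat \<Rightarrow> real) \<Rightarrow> (nat \<Rightarrow> real) \<Rightarrow> nat \<Rightarrow> real \<Rightarrow> real" where
  "btil \<nu> n r c k a = (-1) ^ k *
     (\<nu> * sig {1..n} r (int k)
      + (\<Sum>i\<in>{1..n}. c i / sqrt (a - r i) * sig ({1..n} - {i}) r (int k - 1)))"

definition ctil :: "real \<Rightarrow> nat \<Rightarrow> (nat \<Rightarrow> real) \<Rightarrow> (nat \<Rightarrow> real) \<Rightarrow> nat \<Rightarrow> real \<Rightarrow> real" where
  "ctil \<nu> n r c k a = (-1) ^ (k + 1) / 2 *
     (\<nu>\<^sup>2 * a * sig {1..n} r (int k)
      + 2 * \<nu> * (\<Sum>i\<in>{1..n}. c i / sqrt (a - r i) *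
            (sig ({1..n} - {i}) r (int k) + a * sig ({1..n} - {i}) r (int k - 1)))
      + (\<Sum>i\<in>{1..n}. (c i)\<^sup>2 / (a - r i) * sig ({1..n} - {i}) r (int k - 1))
      + (\<Sum>i\<in>{1..n}. \<Sum>j\<in>{1..n} - {i}. c i * c j / sqrt ((a - r i) * (a - r j)) *
            (sig ({1..n} - {i, j}) r (int k - 1) + a * sig ({1..n} - {i, j}) r (int k - 2))))"

definition Pifun :: "real \<Rightarrow> nat \<Rightarrow> (nat \<Rightarrow> real) \<Rightarrow> (nat \<Rightarrow> real) \<Rightarrow> real \<Rightarrow> real \<Rightarrow> real" where
  "Pifun \<nu> n r c a Pa = a / deriv (xfun \<nu> n r c) a * Pa"

definition Hfun :: "real \<Rightarrow> nat \<Rightarrow> (nat \<Rightarrow> real) \<Rightarrow> (nat \<Rightarrow> real) \<Rightarrow> real \<Rightarrow> real \<Rightarrow> real \<Rightarrow> real" where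
  "Hfun \<nu> n r c a Pa Py = (Pifun \<nu> n r c a Pa)\<^sup>2 + a * Py\<^sup>2"

definition Gfun :: "real \<Rightarrow> nat \<Rightarrow> (nat \<Rightarrow> real) \<Rightarrow> (nat \<Rightarrow> real) \<Rightarrow> real \<Rightarrow> real \<Rightarrow> real \<Rightarrow> real" where
  "Gfun \<nu> n r c a Pa Py = (\<Sum>k\<in>{0..n}. coeff (Fpoly {1..n} r) (n - k)
       * (Hfun \<nu> n r c a Pa Py) ^ (n - k) * Py ^ (2 * k + 1))"

definition Q1fun :: "real \<Rightarrow> nat \<Rightarrow> (nat \<Rightarrow> real) \<Rightarrow> (nat \<Rightarrow> real) \<Rightarrow> real \<Rightarrow> real \<Rightarrow> real \<Rightarrow> real" where
  "Q1fun \<nu> n r c a Pa Py = (\<Sum>k\<in>{0..n}. btil \<nu> n r c k a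
       * (Hfun \<nu> n r c a Pa Py) ^ (n - k) * Pifun \<nu> n r c a Pa * Py ^ (2 * k))"

definition Q2fun :: "real \<Rightarrow> nat \<Rightarrow> (nat \<Rightarrow> real) \<Rightarrow> (nat \<Rightarrow> real) \<Rightarrow> real \<Rightarrow> real \<Rightarrow> real \<Rightarrow> real" where
  "Q2fun \<nu> n r c a Pa Py = (\<Sum>k\<in>{0..n}. ctil \<nu> n r c k a
       * (Hfun \<nu> n r c a Pa Py) ^ (n - k) * Py ^ (2 * k + 1))"

definition S1fun :: "real \<Rightarrow> nat \<Rightarrow> (nat \<Rightarrow> real) \<Rightarrow> (nat \<Rightarrow> real) \<Rightarrow> real \<times> real \<times> real \<times> real \<Rightarrow> real" where
  "S1fun \<nu> n r c = (\<lambda>(a, y, Pa, Py). Q1fun \<nu> n r c a Pa Py + y * Gfun \<nu> n r c a Pa Py)"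

definition S2fun :: "real \<Rightarrow> nat \<Rightarrow> (nat \<Rightarrow> real) \<Rightarrow> (nat \<Rightarrow> real) \<Rightarrow> real \<times> real \<times> real \<times> real \<Rightarrow> real" where
  "S2fun \<nu> n r c = (\<lambda>(a, y, Pa, Py). Q2fun \<nu> n r c a Pa Py + y * Q1fun \<nu> n r c a Pa Py
                       + y\<^sup>2 / 2 * Gfun \<nu> n r c a Pa Py)"

text \<open>Cotangent lift of the coordinate change a = u^2: (u, y, p_u, p_y) maps to
  (a, y, P_a, P_y) = (u^2, y, p_u / (2u), p_y).\<close>
definition lift_u :: "real \<times> real \<times> real \<times> real \<Rightarrow> real \<times> real \<times> real \<times> real" where
  "lift_u = (\<lambda>(u, y, pu, py). (u\<^sup>2, y, pu / (2 * u), py))"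

text \<open>Components of g = xdot^2 a^-2 da^2 + a^-1 dy^2 in the coordinates (u, y), a = u^2
  (the du dy component is 0).\<close>
definition g_uu :: "real \<Rightarrow> nat \<Rightarrow> (nat \<Rightarrow> real) \<Rightarrow> (nat \<Rightarrow> real) \<Rightarrow> real \<Rightarrow> real" where
  "g_uu \<nu> n r c u = (deriv (xfun \<nu> n r c) (u\<^sup>2))\<^sup>2 / (u\<^sup>2)\<^sup>2 * (2 * u)\<^sup>2"

definition g_yy :: "real \<Rightarrow> real" where
  "g_yy u = 1 / u\<^sup>2"

definition Mdom :: "(real \<times> real) set" where
  "Mdom = {p. fst p > 0}"

definition TMdom :: "(real \<times> real \<times> real \<times> real) set" where
  "TMdom = {p. fst p > 0}"

definition globally_defined :: "real \<Rightarrow> nat \<Rightarrow> (nat \<Rightarrow> real) \<Rightarrow> (nat \<Rightarrow> real) \<Rightarrow> bool" where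
  "globally_defined \<nu> n r c \<longleftrightarrow>
     \<comment> \<open>g is a smooth Riemannian metric on M\<close>
     Cinf_on Mdom (\<lambda>(u, y). g_uu \<nu> n r c u) \<and> Cinf_on Mdom (\<lambda>(u, y). g_yy u)
     \<and> (\<forall>u>0. g_uu \<nu> n r c u > 0 \<and> g_yy u > 0)
     \<comment> \<open>g = Phi (dt^2 + dy^2) / t^2 for a smooth diffeomorphism t of (0,oo)\<close>
     \<and> (\<exists>t \<Phi>. bij_betw t {0<..} {0<..} \<and> Cinf_on {0<..} t
           \<and> Cinf_on {0<..} (inv_into {0<..} t)
           \<and> Cinf_on Mdom \<Phi> \<and> (\<forall>p\<in>Mdom. \<Phi> p > 0)
           \<and> (\<forall>u y. u > 0 \<longrightarrow>
                 g_uu \<nu> n r c u = \<Phi> (u, y) * (deriv t u)\<^sup>2 / (t u)\<^sup>2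
               \<and> g_yy u = \<Phi> (u, y) / (t u)\<^sup>2))
     \<comment> \<open>S_1, S_2 smooth on T*M\<close>
     \<and> Cinf_on TMdom (S1fun \<nu> n r c \<circ> lift_u)
     \<and> Cinf_on TMdom (S2fun \<nu> n r c \<circ> lift_u)"

end

theory Submission
  imports Defs
begin


lemma Ck_mono: "Ck_on (Suc k) S f \<Longrightarrow> Ck_on k S f"
proof (induction k arbitrary: f)
  case 0
  then obtain f' where d: "\<forall>x\<in>S. (f has_derivative f' x) (at x)" by auto
  have "continuous_on S f"
    by (metis continuous_at_imp_continuous_on d has_derivative_continuous)
  then show ?case by simp
next
  case (Suc k)
  then obtain f' where d: "\<forall>x\<in>S. (f has_derivative f' x) (at x)"
    and p: "\<forall>i\<in>Basis. Ck_on (Suc k) S (\<lambda>x. f' x i)" by auto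
  show ?case using d p Suc.IH by auto
qed

lemma Ck_mono_le: "m \<le> k \<Longrightarrow> Ck_on k S f \<Longrightarrow> Ck_on m S f"
proof (induction k)
  case 0 then show ?case by simp
next
  case (Suc k) then show ?case by (metis Ck_mono le_Suc_eq)
qed

lemma Ck_const: "Ck_on k S (\<lambda>x. c)"
proof (induction k arbitrary: c)
  case 0 then show ?case by simp
next
  case (Suc k)
  have "\<forall>x\<in>S. ((\<lambda>x. c) has_derivative (\<lambda>h. 0)) (at x)" by simp
  then show ?case using Suc.IH by (auto intro!: exI[of _ "\<lambda>x h. 0"])
qed

lemma Ck_linear: "bounded_linear L \<Longrightarrow> Ck_on k S (L :: 'a::euclidean_space \<Rightarrow> real)"
proof (cases k)
  case 0
  assume "bounded_linear L"
  then show ?thesis using 0 by (simp add: linear_continuous_on)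
next
  case (Suc m)
  assume L: "bounded_linear L"
  have "\<forall>x\<in>S. (L has_derivative L) (at x)" using L by (simp add: bounded_linear_imp_has_derivative)
  then show ?thesis using Suc by (auto intro!: exI[of _ "\<lambda>x. L"] Ck_const)
qed

lemma Ck_add: "Ck_on k S f \<Longrightarrow> Ck_on k S g \<Longrightarrow> Ck_on k S (\<lambda>x. f x + g x)"
proof (induction k arbitrary: f g)
  case 0 then show ?case by (auto intro: continuous_on_add)
next
  case (Suc k)
  from Suc.prems(1) obtain f' where df: "\<forall>x\<in>S. (f has_derivative f' x) (at x)"
    and pf: "\<forall>i\<in>Basis. Ck_on k S (\<lambda>x. f' x i)" by auto
  from Suc.prems(2) obtain g' where dg: "\<forall>x\<in>S. (g has_derivative g' x) (at x)"
    and pg: "\<forall>i\<in>Basis. Ck_on k S (\<lambda>x. g' x i)" by auto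
  have "\<forall>x\<in>S. ((\<lambda>x. f x + g x) has_derivative (\<lambda>h. f' x h + g' x h)) (at x)"
    using df dg by (auto intro: has_derivative_add)
  then show ?case using pf pg Suc.IH by (auto intro!: exI[of _ "\<lambda>x h. f' x h + g' x h"])
qed

lemma Ck_mult: "Ck_on k S f \<Longrightarrow> Ck_on k S g \<Longrightarrow> Ck_on k S (\<lambda>x. f x * g x)"
proof (induction k arbitrary: f g)
  case 0 then show ?case by (auto intro: continuous_on_mult)
next
  case (Suc k)
  from Suc.prems(1) obtain f' where df: "\<forall>x\<in>S. (f has_derivative f' x) (at x)"
    and pf: "\<forall>i\<in>Basis. Ck_on k S (\<lambda>x. f' x i)" by auto
  from Suc.prems(2) obtain g' where dg: "\<forall>x\<in>S. (g has_derivative g' x) (at x)"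
    and pg: "\<forall>i\<in>Basis. Ck_on k S (\<lambda>x. g' x i)" by auto
  have f: "Ck_on k S f" and g: "Ck_on k S g" using Suc.prems Ck_mono by blast+
  have "\<forall>x\<in>S. ((\<lambda>x. f x * g x) has_derivative (\<lambda>h. f x * g' x h + f' x h * g x)) (at x)"
    using df dg by (auto intro: has_derivative_mult)
  moreover have "\<forall>i\<in>Basis. Ck_on k S (\<lambda>x. f x * g' x i + f' x i * g x)"
    using pf pg f g by (auto intro!: Ck_add Suc.IH)
  ultimately show ?case by (auto intro!: exI[of _ "\<lambda>x h. f x * g' x h + f' x h * g x"])
qed

lemma Ck_compose:
  fixes f :: "real \<Rightarrow> real" and h :: "'a::euclidean_space \<Rightarrow> real"
  shows "Ck_on k U f \<Longrightarrow> Ck_on k S h \<Longrightarrow> (\<And>x. x \<in> S \<Longrightarrow> h x \<in> U) \<Longrightarrow> Ck_on k S (\<lambda>x. f (h x))"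
proof (induction k arbitrary: f h)
  case 0
  then have "continuous_on U f" "continuous_on S h" "h ` S \<subseteq> U" by auto
  then have "continuous_on S (\<lambda>x. f (h x))" by (rule continuous_on_compose2)
  then show ?case by simp
next
  case (Suc k)
  from Suc.prems(1) obtain f' where df: "\<forall>y\<in>U. (f has_derivative f' y) (at y)"
    and pf0: "\<forall>i\<in>Basis. Ck_on k U (\<lambda>y. f' y i)" by (simp only: Ck_on.simps) blast
  have pf: "Ck_on k U (\<lambda>y. f' y 1)" using pf0 by (simp add: Basis_real_def)
  from Suc.prems(2) obtain h' where dh: "\<forall>x\<in>S. (h has_derivative h' x) (at x)"
    and ph: "\<forall>i\<in>Basis. Ck_on k S (\<lambda>x. h' x i)" by (simp only: Ck_on.simps) blast
  have hk: "Ck_on k S h" using Ck_mono[OF Suc.prems(2)] .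
  have lin: "f' y z = z * f' y 1" if "y \<in> U" for y z
  proof -
    have "linear (f' y)" using df that has_derivative_linear by blast
    then have "f' y (z * 1) = z * f' y 1" by (rule linear_scale_real)
    then show ?thesis by simp
  qed
  have "\<forall>x\<in>S. ((\<lambda>x. f (h x)) has_derivative (\<lambda>v. h' x v * f' (h x) 1)) (at x)"
  proof
    fix x assume x: "x \<in> S"
    have c1: "(h has_derivative h' x) (at x)" using dh x by blast
    have c2: "(f has_derivative f' (h x)) (at (h x))" using df Suc.prems(3)[OF x] by blast
    have "((f \<circ> h) has_derivative (f' (h x) \<circ> h' x)) (at x)" by (rule diff_chain_at[OF c1 c2])
    moreover have "(f' (h x) \<circ> h' x) = (\<lambda>v. h' x v * f' (h x) 1)"
      by (rule ext, simp only: o_def, rule lin[OF Suc.prems(3)[OF x]])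
    ultimately show "((\<lambda>x. f (h x)) has_derivative (\<lambda>v. h' x v * f' (h x) 1)) (at x)"
      by (simp add: o_def)
  qed
  moreover have "\<forall>i\<in>Basis. Ck_on k S (\<lambda>x. h' x i * f' (h x) 1)"
  proof
    fix i :: 'a assume i: "i \<in> Basis"
    have "Ck_on k S (\<lambda>x. f' (h x) 1)"
      by (rule Suc.IH[OF pf hk]) (rule Suc.prems(3))
    then show "Ck_on k S (\<lambda>x. h' x i * f' (h x) 1)"
      using ph i by (intro Ck_mult) auto
  qed
  ultimately show ?case by (intro Ck_on.simps(2)[THEN iffD2] exI[of _ "\<lambda>x v. h' x v * f' (h x) 1"] conjI)
qed

lemma Ck_powr: "Ck_on k {0<..} (\<lambda>s::real. s powr a)"
proof (induction k arbitrary: a)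
  case 0
  have "continuous_on {0<..} (\<lambda>s::real. s powr a)"
    by (intro continuous_on_powr' continuous_on_id continuous_on_const) auto
  then show ?case by simp
next
  case (Suc k)
  have "\<forall>s\<in>{0<..}. ((\<lambda>s::real. s powr a) has_derivative (\<lambda>h. a * s powr (a - 1) * h)) (at s)"
    by (auto intro!: has_real_derivative_powr simp: has_field_derivative_def[symmetric])
  moreover have "Ck_on k {0<..} (\<lambda>s::real. a * s powr (a - 1) * 1)"
    by (auto intro!: Ck_mult Ck_const Suc.IH)
  ultimately show ?case by (auto intro!: exI[of _ "\<lambda>s h. a * s powr (a - 1) * h"])
qed

lemma Ck_cong: "open S \<Longrightarrow> (\<And>x. x \<in> S \<Longrightarrow> f x = g x) \<Longrightarrow> Ck_on k S f \<Longrightarrow> Ck_on k S g"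
proof (cases k)
  case 0
  assume "(\<And>x. x \<in> S \<Longrightarrow> f x = g x)" "Ck_on k S f"
  then show ?thesis using 0 by (auto cong: continuous_on_cong)
next
  case (Suc m)
  assume o: "open S" and e: "(\<And>x. x \<in> S \<Longrightarrow> f x = g x)" and c: "Ck_on k S f"
  from c Suc obtain f' where df: "\<forall>x\<in>S. (f has_derivative f' x) (at x)"
    and pf: "\<forall>i\<in>Basis. Ck_on m S (\<lambda>x. f' x i)" by auto
  have "\<forall>x\<in>S. (g has_derivative f' x) (at x)"
    using df e o by (auto intro: has_derivative_transform_within_open)
  then show ?thesis using pf Suc by auto
qed

lemma Cinf_const[intro]: "Cinf_on S (\<lambda>x. c)"
  by (simp add: Cinf_on_def Ck_const)

lemma Cinf_linear: "bounded_linear L \<Longrightarrow> Cinf_on S (L :: 'a::euclidean_space \<Rightarrow> real)"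
  by (simp add: Cinf_on_def Ck_linear)

lemma Cinf_add: "Cinf_on S f \<Longrightarrow> Cinf_on S g \<Longrightarrow> Cinf_on S (\<lambda>x. f x + g x)"
  by (simp add: Cinf_on_def Ck_add)

lemma Cinf_mult: "Cinf_on S f \<Longrightarrow> Cinf_on S g \<Longrightarrow> Cinf_on S (\<lambda>x. f x * g x)"
  by (simp add: Cinf_on_def Ck_mult)

lemma Cinf_uminus: "Cinf_on S f \<Longrightarrow> Cinf_on S (\<lambda>x. - f x)"
proof -
  assume "Cinf_on S f"
  then have "Cinf_on S (\<lambda>x. (-1) * f x)" by (intro Cinf_mult Cinf_const)
  then show ?thesis by simp
qed

lemma Cinf_diff: "Cinf_on S f \<Longrightarrow> Cinf_on S g \<Longrightarrow> Cinf_on S (\<lambda>x. f x - g x)"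
proof -
  assume "Cinf_on S f" "Cinf_on S g"
  then have "Cinf_on S (\<lambda>x. f x + - g x)" by (intro Cinf_add Cinf_uminus)
  then show ?thesis by simp
qed

lemma Cinf_sum: "finite A \<Longrightarrow> (\<And>i. i \<in> A \<Longrightarrow> Cinf_on S (f i)) \<Longrightarrow> Cinf_on S (\<lambda>x. \<Sum>i\<in>A. f i x)"
proof (induction A rule: finite_induct)
  case empty then show ?case by (simp add: Cinf_const)
next
  case (insert a A)
  then have "Cinf_on S (\<lambda>x. f a x + (\<Sum>i\<in>A. f i x))" by (intro Cinf_add) auto
  then show ?case using insert by simp
qed

lemma Cinf_power: "Cinf_on S f \<Longrightarrow> Cinf_on S (\<lambda>x. f x ^ m)"
proof (induction m)
  case 0 then show ?case by (simp add: Cinf_const)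
next
  case (Suc m)
  then have "Cinf_on S (\<lambda>x. f x * f x ^ m)" by (intro Cinf_mult) auto
  then show ?case by simp
qed

lemma Cinf_cong: "open S \<Longrightarrow> (\<And>x. x \<in> S \<Longrightarrow> f x = g x) \<Longrightarrow> Cinf_on S f \<Longrightarrow> Cinf_on S g"
  unfolding Cinf_on_def by (metis Ck_cong)

lemma Cinf_compose:
  fixes f :: "real \<Rightarrow> real" and h :: "'a::euclidean_space \<Rightarrow> real"
  shows "Cinf_on U f \<Longrightarrow> Cinf_on S h \<Longrightarrow> (\<And>x. x \<in> S \<Longrightarrow> h x \<in> U) \<Longrightarrow> Cinf_on S (\<lambda>x. f (h x))"
  unfolding Cinf_on_def using Ck_compose by blast

lemma Cinf_powr: "Cinf_on S h \<Longrightarrow> (\<And>x. x \<in> S \<Longrightarrow> 0 < h x) \<Longrightarrow> Cinf_on S (\<lambda>x. h x powr a)"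
  by (rule Cinf_compose[where U="{0<..}"]) (auto simp: Cinf_on_def Ck_powr)

lemma Cinf_sqrt: "open S \<Longrightarrow> Cinf_on S h \<Longrightarrow> (\<And>x. x \<in> S \<Longrightarrow> 0 < h x) \<Longrightarrow> Cinf_on S (\<lambda>x. sqrt (h x))"
proof -
  assume o: "open S" and h: "Cinf_on S h" and p: "\<And>x. x \<in> S \<Longrightarrow> 0 < h x"
  have c: "Cinf_on S (\<lambda>x. h x powr (1/2))" using h p by (rule Cinf_powr)
  have e: "\<And>x. x \<in> S \<Longrightarrow> h x powr (1/2) = sqrt (h x)"
    using p by (simp add: powr_half_sqrt less_imp_le)
  show ?thesis by (rule Cinf_cong[OF o e c])
qed

lemma Cinf_divide: "open S \<Longrightarrow> Cinf_on S f \<Longrightarrow> Cinf_on S g \<Longrightarrow> (\<And>x. x \<in> S \<Longrightarrow> 0 < g x) \<Longrightarrow> Cinf_on S (\<lambda>x. f x / g x)"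
proof -
  assume o: "open S" and f: "Cinf_on S f" and g: "Cinf_on S g" and p: "\<And>x. x \<in> S \<Longrightarrow> 0 < g x"
  have c: "Cinf_on S (\<lambda>x. f x * g x powr (-1))" using f Cinf_powr[OF g p] by (rule Cinf_mult)
  have e: "f x * g x powr (-1) = f x / g x" if x: "x \<in> S" for x
  proof -
    have "0 < g x" using p[OF x] .
    then show ?thesis by (simp add: powr_minus_divide divide_inverse abs_of_pos)
  qed
  show ?thesis by (rule Cinf_cong[OF o e c])
qed

lemma Cinf_fst: "Cinf_on S (\<lambda>x. fst x)"
  by (rule Cinf_linear) (rule bounded_linear_fst)

lemma Cinf_fst_snd: "Cinf_on (S :: (real \<times> real \<times> real \<times> real) set) (\<lambda>x. fst (snd x))"
  by (rule Cinf_linear[OF bounded_linear_compose[OF bounded_linear_fst bounded_linear_snd], unfolded o_def])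

lemma Cinf_fst_snd_snd: "Cinf_on (S :: (real \<times> real \<times> real \<times> real) set) (\<lambda>x. fst (snd (snd x)))"
  by (rule Cinf_linear[OF bounded_linear_compose[OF bounded_linear_fst
     bounded_linear_compose[OF bounded_linear_snd bounded_linear_snd]], unfolded o_def])

lemma Cinf_snd_snd_snd: "Cinf_on (S :: (real \<times> real \<times> real \<times> real) set) (\<lambda>x. snd (snd (snd x)))"
  by (rule Cinf_linear[OF bounded_linear_compose[OF bounded_linear_snd
     bounded_linear_compose[OF bounded_linear_snd bounded_linear_snd]], unfolded o_def])

lemma Cinf_id: "Cinf_on S (\<lambda>x::real. x)"
  by (rule Cinf_linear) (rule bounded_linear_ident)



lemma term_deriv:
  fixes r c a :: real
  assumes "r < a"
  shows "((\<lambda>a. c / sqrt (a - r)) has_real_derivative - (c / (2 * ((a - r) * sqrt (a - r))))) (at a)"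
proof -
  have p: "0 < a - r" using assms by simp
  have s: "sqrt (a - r) * sqrt (a - r) = a - r" using p by simp
  show ?thesis
    using p s by (auto intro!: derivative_eq_intros simp: field_simps abs_of_pos)
qed

lemma phi_deriv:
  fixes r c u :: real
  assumes "r < 0"
  shows "((\<lambda>u. c * u / ((- r) * sqrt (u\<^sup>2 - r))) has_real_derivative (c / ((u\<^sup>2 - r) * sqrt (u\<^sup>2 - r)))) (at u)"
proof -
  have p: "0 < u\<^sup>2 - r" proof -
    have "0 \<le> u\<^sup>2" by simp
    then show ?thesis using assms by linarith
  qed
  have s: "sqrt (u\<^sup>2 - r) * sqrt (u\<^sup>2 - r) = u\<^sup>2 - r" using p by simp
  have q: "0 < sqrt (u\<^sup>2 - r)" using p by simp
  have e: "- ((c * (r * sqrt (u\<^sup>2 - r)) - c * u * (inverse (sqrt (u\<^sup>2 - r)) * u * r)) /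
        (r * sqrt (u\<^sup>2 - r) * (r * sqrt (u\<^sup>2 - r)))) = c / ((u\<^sup>2 - r) * sqrt (u\<^sup>2 - r))"
  proof -
    define S where "S = sqrt (u\<^sup>2 - r)"
    have S: "S * S = u\<^sup>2 - r" "0 < S" using s q by (auto simp: S_def)
    have r0: "r \<noteq> 0" using assms by simp
    have "- ((c * (r * S) - c * u * (inverse S * u * r)) / (r * S * (r * S))) = c / ((u\<^sup>2 - r) * S)"
    proof -
      have "c * u * (inverse S * u * r) = c * r * (S * S + r) / S"
        using S by (simp add: field_simps power2_eq_square)
      then have "- ((c * (r * S) - c * u * (inverse S * u * r)) / (r * S * (r * S)))
           = - ((c * (r * S) - c * r * (S * S + r) / S) / (r * S * (r * S)))" by simp
      also have "\<dots> = c / ((S * S) * S)" using S(2) r0 by (simp add: field_simps)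
      also have "\<dots> = c / ((u\<^sup>2 - r) * S)" using S by simp
      finally show ?thesis .
    qed
    then show ?thesis by (simp add: S_def)
  qed
  show ?thesis
    using p q assms e by (auto intro!: derivative_eq_intros)
qed

definition muf :: "nat \<Rightarrow> (nat \<Rightarrow> real) \<Rightarrow> (nat \<Rightarrow> real) \<Rightarrow> real \<Rightarrow> real" where
  "muf n r c u = 1 - (\<Sum>i\<in>{1..n}. c i / ((u\<^sup>2 - r i) * sqrt (u\<^sup>2 - r i)))"

definition ttf :: "nat \<Rightarrow> (nat \<Rightarrow> real) \<Rightarrow> (nat \<Rightarrow> real) \<Rightarrow> real \<Rightarrow> real" where
  "ttf n r c u = u - (\<Sum>i\<in>{1..n}. c i * u / ((- r i) * sqrt (u\<^sup>2 - r i)))"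

definition Xf :: "nat \<Rightarrow> (nat \<Rightarrow> real) \<Rightarrow> (nat \<Rightarrow> real) \<Rightarrow> real \<Rightarrow> real" where
  "Xf n r c a = 1/2 - (\<Sum>i\<in>{1..n}. c i / (2 * ((a - r i) * sqrt (a - r i))))"

lemma xfun_deriv:
  assumes "\<forall>i\<in>{1..n}. r i < a"
  shows "(xfun 1 n r c has_real_derivative Xf n r c a) (at a)"
proof -
  have "((\<lambda>a. 1 / 2 * a + (\<Sum>i\<in>{1..n}. c i / sqrt (a - r i))) has_real_derivative
      1/2 * 1 + (\<Sum>i\<in>{1..n}. - (c i / (2 * ((a - r i) * sqrt (a - r i)))))) (at a)"
    by (intro DERIV_add DERIV_cmult DERIV_ident DERIV_sum term_deriv) (use assms in auto)
  moreover have "1/2 * 1 + (\<Sum>i\<in>{1..n}. - (c i / (2 * ((a - r i) * sqrt (a - r i))))) = Xf n r c a"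
    by (simp add: Xf_def sum_negf)
  ultimately show ?thesis by (simp add: xfun_def[abs_def])
qed

lemma deriv_xfun:
  assumes "\<forall>i\<in>{1..n}. r i < a"
  shows "deriv (xfun 1 n r c) a = Xf n r c a"
  using xfun_deriv[OF assms] by (rule DERIV_imp_deriv)

lemma mu_X: "muf n r c u = 2 * Xf n r c (u\<^sup>2)"
  by (simp add: muf_def Xf_def right_diff_distrib sum_distrib_left)

lemma ttf_deriv:
  assumes "\<forall>i\<in>{1..n}. r i < 0"
  shows "(ttf n r c has_real_derivative muf n r c u) (at u)"
proof -
  have "((\<lambda>u. u - (\<Sum>i\<in>{1..n}. c i * u / ((- r i) * sqrt (u\<^sup>2 - r i)))) has_real_derivative
      1 - (\<Sum>i\<in>{1..n}. c i / ((u\<^sup>2 - r i) * sqrt (u\<^sup>2 - r i)))) (at u)"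
    by (intro DERIV_diff DERIV_ident DERIV_sum phi_deriv) (use assms in auto)
  then show ?thesis by (simp add: ttf_def[abs_def] muf_def)
qed

lemmas Cinf_intros = Cinf_const Cinf_add Cinf_diff Cinf_mult Cinf_uminus Cinf_sum Cinf_power
  Cinf_divide Cinf_sqrt

context
  fixes n :: nat and r c :: "nat \<Rightarrow> real" and S :: "'a::euclidean_space set"
    and A :: "'a \<Rightarrow> real"
  assumes neg: "\<forall>i\<in>{1..n}. r i < 0"
    and Xpos: "\<forall>a>0. 0 < Xf n r c a"
    and oS: "open S" and CA: "Cinf_on S A" and Apos: "\<forall>x\<in>S. 0 < A x"
begin

lemma Ar_pos: "x \<in> S \<Longrightarrow> i \<in> {1..n} \<Longrightarrow> 0 < A x - r i"
  using neg Apos by (metis diff_gt_0_iff_gt less_trans)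

lemma XA_pos: "x \<in> S \<Longrightarrow> 0 < Xf n r c (A x)"
  using Xpos Apos by blast

lemma Cinf_Pifun:
  assumes CP: "Cinf_on S P"
  shows "Cinf_on S (\<lambda>x. Pifun 1 n r c (A x) (P x))"
proof -
  have c: "Cinf_on S (\<lambda>x. A x / Xf n r c (A x) * P x)"
    apply (intro Cinf_divide Cinf_mult CP CA oS)
      apply (unfold Xf_def)
      apply (intro Cinf_intros CA oS)
    using Ar_pos XA_pos by (auto simp: Xf_def)
  have e: "A x / Xf n r c (A x) * P x = Pifun 1 n r c (A x) (P x)" if "x \<in> S" for x
  proof -
    have "\<forall>i\<in>{1..n}. r i < A x" using Ar_pos[OF that] by auto
    then show ?thesis by (simp add: Pifun_def deriv_xfun)
  qed
  show ?thesis by (rule Cinf_cong[OF oS e c])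
qed

lemma Cinf_Hfun:
  assumes CP: "Cinf_on S P" and CQ: "Cinf_on S Q"
  shows "Cinf_on S (\<lambda>x. Hfun 1 n r c (A x) (P x) (Q x))"
  unfolding Hfun_def by (intro Cinf_intros Cinf_Pifun CA CP CQ)

lemma Cinf_Gfun:
  assumes CP: "Cinf_on S P" and CQ: "Cinf_on S Q"
  shows "Cinf_on S (\<lambda>x. Gfun 1 n r c (A x) (P x) (Q x))"
  unfolding Gfun_def by (intro Cinf_intros Cinf_Hfun CA CP CQ) auto

lemma Cinf_Q1fun:
  assumes CP: "Cinf_on S P" and CQ: "Cinf_on S Q"
  shows "Cinf_on S (\<lambda>x. Q1fun 1 n r c (A x) (P x) (Q x))"
  unfolding Q1fun_def btil_def
  apply (intro Cinf_intros Cinf_Hfun Cinf_Pifun CA CP CQ oS)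
  using Ar_pos by auto

lemma Cinf_Q2fun:
  assumes CP: "Cinf_on S P" and CQ: "Cinf_on S Q"
  shows "Cinf_on S (\<lambda>x. Q2fun 1 n r c (A x) (P x) (Q x))"
  unfolding Q2fun_def ctil_def
  apply (intro Cinf_intros Cinf_Hfun Cinf_Pifun CA CP CQ oS)
  using Ar_pos by (auto intro!: mult_pos_pos)

end


lemma open_Mdom: "open Mdom"
proof -
  have "Mdom = fst -` {0<..}" by (auto simp: Mdom_def)
  then show ?thesis by (metis open_vimage_fst open_greaterThan)
qed

lemma open_TMdom: "open TMdom"
proof -
  have "TMdom = fst -` {0<..}" by (auto simp: TMdom_def)
  then show ?thesis by (metis open_vimage_fst open_greaterThan)
qed

lemma sq_pos: "r < 0 \<Longrightarrow> 0 < (t::real)\<^sup>2 - r"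
proof -
  assume "r < 0"
  moreover have "0 \<le> t\<^sup>2" by simp
  ultimately show ?thesis by linarith
qed

context
  fixes n :: nat and r c :: "nat \<Rightarrow> real"
  assumes neg: "\<forall>i\<in>{1..n}. r i < 0"
    and mupos: "\<forall>u>0. 0 < muf n r c u"
begin

lemma Xpos: "\<forall>a>0. 0 < Xf n r c a"
proof (intro allI impI)
  fix a :: real assume a: "0 < a"
  have "0 < muf n r c (sqrt a)" using mupos a by simp
  then show "0 < Xf n r c a" using a by (simp add: mu_X)
qed

lemma guu_eq: "0 < u \<Longrightarrow> g_uu 1 n r c u = (muf n r c u)\<^sup>2 / u\<^sup>2"
proof -
  assume u: "0 < u"
  have "\<forall>i\<in>{1..n}. r i < u\<^sup>2" using neg u by (metis less_trans zero_less_power)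
  then have d: "deriv (xfun 1 n r c) (u\<^sup>2) = muf n r c u / 2" by (simp add: deriv_xfun mu_X)
  show ?thesis unfolding g_uu_def d using u by (simp add: field_simps power2_eq_square)
qed

lemma Cinf_mu: "Cinf_on S (\<lambda>x. muf n r c (h x))" if "Cinf_on S h" "open S" for S h
  unfolding muf_def
  apply (intro Cinf_intros that)
  using neg sq_pos by (auto intro!: mult_pos_pos)

lemma Cinf_tt: "Cinf_on S (\<lambda>x. ttf n r c (h x))" if "Cinf_on S h" "open S" for S h
  unfolding ttf_def
  apply (intro Cinf_intros that)
  using neg sq_pos by (auto intro!: mult_pos_pos mult_neg_pos)

lemma part1:
  "Cinf_on Mdom (\<lambda>(u, y). g_uu 1 n r c u) \<and> Cinf_on Mdom (\<lambda>(u, y). g_yy u)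
     \<and> (\<forall>u>0. g_uu 1 n r c u > 0 \<and> g_yy u > 0)"
proof (intro conjI allI impI)
  have c: "Cinf_on Mdom (\<lambda>p. (muf n r c (fst p))\<^sup>2 / (fst p)\<^sup>2)"
    by (intro Cinf_intros Cinf_mu Cinf_fst open_Mdom) (auto simp: Mdom_def)
  show "Cinf_on Mdom (\<lambda>(u, y). g_uu 1 n r c u)"
    by (rule Cinf_cong[OF open_Mdom _ c]) (auto simp: Mdom_def guu_eq)
  have c2: "Cinf_on Mdom (\<lambda>p. 1 / (fst p)\<^sup>2)"
    by (intro Cinf_intros Cinf_fst open_Mdom) (auto simp: Mdom_def)
  show "Cinf_on Mdom (\<lambda>(u, y). g_yy u)"
    by (rule Cinf_cong[OF open_Mdom _ c2]) (auto simp: Mdom_def g_yy_def)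
  fix u :: real assume u: "0 < u"
  have "0 < muf n r c u" using mupos u by blast
  then show "g_uu 1 n r c u > 0" using u by (simp add: guu_eq)
  show "g_yy u > 0" using u by (simp add: g_yy_def)
qed

lemma part3:
  "Cinf_on TMdom (S1fun 1 n r c \<circ> lift_u) \<and> Cinf_on TMdom (S2fun 1 n r c \<circ> lift_u)"
proof -
  define A where "A = (\<lambda>p::real\<times>real\<times>real\<times>real. (fst p)\<^sup>2)"
  define P where "P = (\<lambda>p::real\<times>real\<times>real\<times>real. fst (snd (snd p)) / (2 * fst p))"
  define Q where "Q = (\<lambda>p::real\<times>real\<times>real\<times>real. snd (snd (snd p)))"
  have CA: "Cinf_on TMdom A" unfolding A_def by (intro Cinf_intros Cinf_fst)
  have Apos: "\<forall>x\<in>TMdom. 0 < A x" by (auto simp: A_def TMdom_def)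
  have CP: "Cinf_on TMdom P" unfolding P_def
    by (intro Cinf_intros Cinf_fst Cinf_fst_snd_snd open_TMdom) (auto simp: TMdom_def)
  have CQ: "Cinf_on TMdom Q" unfolding Q_def by (rule Cinf_snd_snd_snd)
  have CY: "Cinf_on TMdom (\<lambda>p. fst (snd p))" by (rule Cinf_fst_snd)
  note X = Xpos open_TMdom CA Apos
  have e1: "S1fun 1 n r c \<circ> lift_u = (\<lambda>p. Q1fun 1 n r c (A p) (P p) (Q p) + fst (snd p) * Gfun 1 n r c (A p) (P p) (Q p))"
    by (auto simp: fun_eq_iff lift_u_def S1fun_def A_def P_def Q_def split: prod.splits)
  have e2: "S2fun 1 n r c \<circ> lift_u = (\<lambda>p. Q2fun 1 n r c (A p) (P p) (Q p) + fst (snd p) * Q1fun 1 n r c (A p) (P p) (Q p)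
      + (fst (snd p))\<^sup>2 / 2 * Gfun 1 n r c (A p) (P p) (Q p))"
    by (auto simp: fun_eq_iff lift_u_def S2fun_def A_def P_def Q_def split: prod.splits)
  have 1: "Cinf_on TMdom (S1fun 1 n r c \<circ> lift_u)" unfolding e1
    by (intro Cinf_add Cinf_mult CY Cinf_Q1fun[OF neg X CP CQ] Cinf_Gfun[OF neg X CP CQ])
  have 2: "Cinf_on TMdom (S2fun 1 n r c \<circ> lift_u)" unfolding e2
    by (intro Cinf_add Cinf_mult CY Cinf_Q1fun[OF neg X CP CQ] Cinf_Gfun[OF neg X CP CQ]
        Cinf_Q2fun[OF neg X CP CQ] Cinf_power Cinf_const Cinf_divide open_TMdom) auto
  show ?thesis using 1 2 by simp
qed


lemma tt_deriv': "DERIV (ttf n r c) x :> muf n r c x"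
  using ttf_deriv[OF neg] .

lemma tt_cont: "isCont (ttf n r c) x"
  using tt_deriv' by (rule DERIV_isCont)

lemma tt_mono: "0 < x \<Longrightarrow> x < y \<Longrightarrow> ttf n r c x < ttf n r c y"
  by (rule DERIV_pos_imp_increasing) (use tt_deriv' mupos in force)+

lemma part2:
  assumes m: "0 < m" "\<forall>u>0. m * u \<le> ttf n r c u" and M: "\<forall>u>0. ttf n r c u \<le> M * u"
  shows "\<exists>t \<Phi>. bij_betw t {0<..} {0<..} \<and> Cinf_on {0<..} t
           \<and> Cinf_on {0<..} (inv_into {0<..} t)
           \<and> Cinf_on Mdom \<Phi> \<and> (\<forall>p\<in>Mdom. \<Phi> p > 0)
           \<and> (\<forall>u y. u > 0 \<longrightarrow>
                 g_uu 1 n r c u = \<Phi> (u, y) * (deriv t u)\<^sup>2 / (t u)\<^sup>2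
               \<and> g_yy u = \<Phi> (u, y) / (t u)\<^sup>2)"
proof -
  define t where "t = ttf n r c"
  define \<Phi> where "\<Phi> = (\<lambda>p::real\<times>real. (t (fst p) / fst p)\<^sup>2)"
  define g where "g = inv_into {0<..} t"
  have tpos: "0 < t u" if "0 < u" for u
  proof -
    have "m * u \<le> t u" using m that by (simp add: t_def)
    moreover have "0 < m * u" using m that by simp
    ultimately show ?thesis by linarith
  qed
  have inj: "inj_on t {0<..}"
  proof (rule inj_onI)
    fix x y assume x: "x \<in> {0<..}" and y: "y \<in> {0<..}" and e: "t x = t y"
    show "x = y"
    proof (rule ccontr)
      assume "x \<noteq> y"
      then consider "x < y" | "y < x" by linarith
      then show False using tt_mono x y e unfolding t_def by (metis greaterThan_iff less_irrefl)
    qed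
  qed
  have img: "t ` {0<..} = {0<..}"
  proof
    show "t ` {0<..} \<subseteq> {0<..}" using tpos by auto
    show "{0<..} \<subseteq> t ` {0<..}"
    proof
      fix v :: real assume "v \<in> {0<..}"
      then have v: "0 < v" by simp
      have mM: "m \<le> M" using m(2) M by (metis mult.right_neutral order_trans zero_less_one)
      define u1 where "u1 = v / (2 * M)"
      define u2 where "u2 = 2 * v / m"
      have Mp: "0 < M" using m mM by linarith
      have u1: "0 < u1" using v Mp by (simp add: u1_def)
      have u2: "0 < u2" using v m by (simp add: u2_def)
      have "t u1 \<le> M * u1" using M u1 by (simp add: t_def)
      also have "\<dots> = v / 2" using Mp by (simp add: u1_def)
      finally have a: "t u1 \<le> v" using v by linarith
      have "m * u2 \<le> t u2" using m u2 by (simp add: t_def)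
      moreover have "m * u2 = 2 * v" using m by (simp add: u2_def)
      ultimately have b: "v \<le> t u2" using v by linarith
      have le: "u1 \<le> u2"
      proof -
        have "u1 = v / (2 * M)" by (simp add: u1_def)
        also have "\<dots> \<le> v / (2 * m)" using v m mM by (intro divide_left_mono) auto
        also have "\<dots> \<le> 2 * v / m" using v m by (simp add: field_simps)
        finally show ?thesis by (simp add: u2_def)
      qed
      have "continuous_on {u1..u2} t" unfolding t_def
        using tt_cont by (intro continuous_at_imp_continuous_on) auto
      then obtain x where x: "u1 \<le> x" "x \<le> u2" "t x = v" using IVT'[OF a b le] by blast
      then show "v \<in> t ` {0<..}" using u1 by force
    qed
  qed
  have bij: "bij_betw t {0<..} {0<..}" using inj img by (simp add: bij_betw_def)
  have g1: "0 < g y \<and> t (g y) = y" if "0 < y" for y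
    using that img unfolding g_def
    by (metis f_inv_into_f greaterThan_iff image_eqI inv_into_into)
  have g2: "g (t x) = x" if "0 < x" for x
    using inj that unfolding g_def by (simp add: inv_into_f_f)
  have gcont: "isCont g y" if y: "0 < y" for y
  proof -
    define x where "x = g y"
    have x: "0 < x" "t x = y" using g1[OF y] by (auto simp: x_def)
    have inj': "g (t z) = z" if "\<bar>z - x\<bar> \<le> x / 2" for z
    proof -
      have "x - z \<le> x / 2" using that by linarith
      then have "0 < z" using x(1) by linarith
      then show ?thesis by (rule g2)
    qed
    have cont': "isCont t z" for z unfolding t_def by (rule tt_cont)
    have "isCont g (t x)"
      by (rule isCont_inverse_function[where d="x/2" and f=t and g=g]) (use x inj' cont' in auto)
    then show ?thesis using x by simp
  qed
  have gder: "DERIV g y :> inverse (muf n r c (g y))" if y: "0 < y" for y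
  proof (rule DERIV_inverse_function[where f = t and a = 0 and b = "y + 1"])
    show "DERIV t (g y) :> muf n r c (g y)" unfolding t_def by (rule tt_deriv')
    show "muf n r c (g y) \<noteq> 0" using mupos g1[OF y] by (metis less_irrefl)
    show "0 < y" "y < y + 1" using y by auto
    show "isCont g y" using gcont y .
    fix z :: real assume "0 < z" "z < y + 1"
    then show "t (g z) = z" using g1 by blast
  qed
  have Cinv: "Cinf_on {0<..} (\<lambda>u. inverse (muf n r c u))"
  proof -
    have "Cinf_on {0<..} (\<lambda>u. 1 / muf n r c u)"
      by (intro Cinf_divide Cinf_const Cinf_mu Cinf_id) (use mupos in auto)
    then show ?thesis by (simp add: inverse_eq_divide)
  qed
  have Cg: "Ck_on k {0<..} g" for k
  proof (induction k)
    case 0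
    have "continuous_on {0<..} g" by (intro continuous_at_imp_continuous_on) (use gcont in auto)
    then show ?case by simp
  next
    case (Suc k)
    have d: "\<forall>y\<in>{0<..}. (g has_derivative (\<lambda>h. inverse (muf n r c (g y)) * h)) (at y)"
      using gder by (auto simp: has_field_derivative_def)
    have "Ck_on k {0<..} (\<lambda>y. inverse (muf n r c (g y)))"
      by (rule Ck_compose[where U="{0<..}"]) (use Cinv Suc.IH g1 in \<open>auto simp: Cinf_on_def\<close>)
    then have "Ck_on k {0<..} (\<lambda>y. inverse (muf n r c (g y)) * 1)" by simp
    then show ?case using d by (auto simp: Basis_real_def intro!: exI[of _ "\<lambda>y h. inverse (muf n r c (g y)) * h"])
  qed
  have Ct: "Cinf_on {0<..} t" unfolding t_def by (intro Cinf_tt Cinf_id) auto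
  have CPhi: "Cinf_on Mdom \<Phi>" unfolding \<Phi>_def t_def
    by (intro Cinf_intros Cinf_tt Cinf_fst open_Mdom) (auto simp: Mdom_def)
  have Ppos: "\<forall>p\<in>Mdom. \<Phi> p > 0" using tpos by (auto simp: \<Phi>_def Mdom_def) (metis less_irrefl)
  have eqs: "g_uu 1 n r c u = \<Phi> (u, y) * (deriv t u)\<^sup>2 / (t u)\<^sup>2 \<and> g_yy u = \<Phi> (u, y) / (t u)\<^sup>2"
    if u: "0 < u" for u y
  proof -
    have dt: "deriv t u = muf n r c u" unfolding t_def using tt_deriv' by (rule DERIV_imp_deriv)
    have tu: "t u \<noteq> 0" using tpos[OF u] by simp
    show ?thesis using u tu by (simp add: guu_eq g_yy_def \<Phi>_def dt field_simps)
  qed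
  show ?thesis
    apply (rule exI[of _ t], rule exI[of _ \<Phi>])
    using bij Ct Cg CPhi Ppos eqs by (auto simp: Cinf_on_def g_def)
qed

lemma general_gd:
  assumes m: "0 < m" "\<forall>u>0. m * u \<le> ttf n r c u" and M: "\<forall>u>0. ttf n r c u \<le> M * u"
  shows "globally_defined 1 n r c"
  unfolding globally_defined_def using part1 part2[OF m M] part3 by blast

end


lemma tt_alt: "ttf n r c u = u * (1 - (\<Sum>i\<in>{1..n}. c i / ((- r i) * sqrt (u\<^sup>2 - r i))))"
  unfolding ttf_def by (simp add: right_diff_distrib sum_distrib_left mult.commute)

lemma den_mono:
  fixes r u :: real assumes r: "r < 0"
  shows "0 < (- r) * sqrt (- r) + 0 * u" "(- r) * sqrt (- r) \<le> (u\<^sup>2 - r) * sqrt (u\<^sup>2 - r)"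
    "(- r) * sqrt (- r) \<le> (- r) * sqrt (u\<^sup>2 - r)"
proof -
  have "0 \<le> u\<^sup>2" by simp
  then have a: "- r \<le> u\<^sup>2 - r" by linarith
  have b: "sqrt (- r) \<le> sqrt (u\<^sup>2 - r)" using a by (rule real_sqrt_le_mono)
  have "0 < (- r) * sqrt (- r)" using r by (intro mult_pos_pos) auto
  then show "0 < (- r) * sqrt (- r) + 0 * u" by simp
  show "(- r) * sqrt (- r) \<le> (u\<^sup>2 - r) * sqrt (u\<^sup>2 - r)"
    using a b r sq_pos[OF r, of u] by (intro mult_mono) auto
  show "(- r) * sqrt (- r) \<le> (- r) * sqrt (u\<^sup>2 - r)"
    using b r by (intro mult_left_mono) auto
qed

lemma pos_case:
  assumes neg: "\<forall>i\<in>{1..n}. r i < 0" and cpos: "\<forall>i\<in>{1..n}. 0 < c i"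
    and K: "(\<Sum>i\<in>{1..n}. c i / ((- r i) * sqrt (- r i))) < 1"
  shows "globally_defined 1 n r c"
proof -
  define K where "K = (\<Sum>i\<in>{1..n}. c i / ((- r i) * sqrt (- r i)))"
  have t1: "c i / ((u\<^sup>2 - r i) * sqrt (u\<^sup>2 - r i)) \<le> c i / ((- r i) * sqrt (- r i))"
    if "i \<in> {1..n}" for i u
  proof -
    have ri: "r i < 0" and ci: "0 < c i" using that neg cpos by auto
    note d = den_mono[OF ri, of u]
    have p1: "0 < (- r i) * sqrt (- r i)" using d(1) by simp
    have p2: "0 < (u\<^sup>2 - r i) * sqrt (u\<^sup>2 - r i)" using p1 d(2) by linarith
    show ?thesis by (rule divide_left_mono[OF _ _ mult_pos_pos[OF p2 p1]]) (use d ci in auto)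
  qed
  have t2: "c i / ((- r i) * sqrt (u\<^sup>2 - r i)) \<le> c i / ((- r i) * sqrt (- r i))"
    if "i \<in> {1..n}" for i u
  proof -
    have ri: "r i < 0" and ci: "0 < c i" using that neg cpos by auto
    note d = den_mono[OF ri, of u]
    have p1: "0 < (- r i) * sqrt (- r i)" using d(1) by simp
    have p2: "0 < (- r i) * sqrt (u\<^sup>2 - r i)" using p1 d(3) by linarith
    show ?thesis by (rule divide_left_mono[OF _ _ mult_pos_pos[OF p2 p1]]) (use d ci in auto)
  qed
  have t3: "0 \<le> c i / ((- r i) * sqrt (u\<^sup>2 - r i))" if "i \<in> {1..n}" for i u
  proof -
    have ri: "r i < 0" and ci: "0 < c i" using that neg cpos by auto
    note d = den_mono[OF ri, of u]
    have p1: "0 < (- r i) * sqrt (- r i)" using d(1) by simp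
    have p2: "0 < (- r i) * sqrt (u\<^sup>2 - r i)" using p1 d(3) by linarith
    show ?thesis using ci p2 by (intro divide_nonneg_pos) auto
  qed
  have mupos: "\<forall>u>0. 0 < muf n r c u"
  proof (intro allI impI)
    fix u :: real
    have "(\<Sum>i\<in>{1..n}. c i / ((u\<^sup>2 - r i) * sqrt (u\<^sup>2 - r i))) \<le> K"
      unfolding K_def by (intro sum_mono t1)
    then show "0 < muf n r c u" using K by (simp add: muf_def K_def)
  qed
  have m: "\<forall>u>0. (1 - K) * u \<le> ttf n r c u"
  proof (intro allI impI)
    fix u :: real assume u: "0 < u"
    have "(\<Sum>i\<in>{1..n}. c i / ((- r i) * sqrt (u\<^sup>2 - r i))) \<le> K"
      unfolding K_def by (intro sum_mono t2)
    then show "(1 - K) * u \<le> ttf n r c u" unfolding tt_alt using u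
      by (simp add: mult.commute mult_left_mono)
  qed
  have M: "\<forall>u>0. ttf n r c u \<le> 1 * u"
  proof (intro allI impI)
    fix u :: real assume u: "0 < u"
    have "0 \<le> (\<Sum>i\<in>{1..n}. c i / ((- r i) * sqrt (u\<^sup>2 - r i)))"
      by (intro sum_nonneg t3)
    then show "ttf n r c u \<le> 1 * u" unfolding tt_alt using u
      by (simp add: mult_left_le)
  qed
  have "0 < 1 - K" using K by (simp add: K_def)
  then show ?thesis using general_gd[OF neg mupos _ m M] by blast
qed

lemma neg_case:
  assumes neg: "\<forall>i\<in>{1..n}. r i < 0" and cneg: "\<forall>i\<in>{1..n}. c i < 0"
  shows "globally_defined 1 n r c"
proof -
  define K where "K = (\<Sum>i\<in>{1..n}. - c i / ((- r i) * sqrt (- r i)))"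
  have t1: "0 \<le> - c i / ((u\<^sup>2 - r i) * sqrt (u\<^sup>2 - r i))"
    if "i \<in> {1..n}" for i u
  proof -
    have ri: "r i < 0" and ci: "0 < - c i" using that neg cneg by auto
    note d = den_mono[OF ri, of u]
    have p1: "0 < (- r i) * sqrt (- r i)" using d(1) by simp
    have p2: "0 < (u\<^sup>2 - r i) * sqrt (u\<^sup>2 - r i)" using p1 d(2) by linarith
    show ?thesis using ci p2 by (intro divide_nonneg_pos) auto
  qed
  have t2: "- c i / ((- r i) * sqrt (u\<^sup>2 - r i)) \<le> - c i / ((- r i) * sqrt (- r i))"
    if "i \<in> {1..n}" for i u
  proof -
    have ri: "r i < 0" and ci: "0 < - c i" using that neg cneg by auto
    note d = den_mono[OF ri, of u]
    have p1: "0 < (- r i) * sqrt (- r i)" using d(1) by simp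
    have p2: "0 < (- r i) * sqrt (u\<^sup>2 - r i)" using p1 d(3) by linarith
    show ?thesis by (rule divide_left_mono[OF _ _ mult_pos_pos[OF p2 p1]]) (use d ci in auto)
  qed
  have t3: "0 \<le> - c i / ((- r i) * sqrt (u\<^sup>2 - r i))" if "i \<in> {1..n}" for i u
  proof -
    have ri: "r i < 0" and ci: "0 < - c i" using that neg cneg by auto
    note d = den_mono[OF ri, of u]
    have p1: "0 < (- r i) * sqrt (- r i)" using d(1) by simp
    have p2: "0 < (- r i) * sqrt (u\<^sup>2 - r i)" using p1 d(3) by linarith
    show ?thesis using ci p2 by (intro divide_nonneg_pos) auto
  qed
  have mupos: "\<forall>u>0. 0 < muf n r c u"
  proof (intro allI impI)
    fix u :: real
    have "0 \<le> (\<Sum>i\<in>{1..n}. - c i / ((u\<^sup>2 - r i) * sqrt (u\<^sup>2 - r i)))"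
      by (intro sum_nonneg t1)
    then show "0 < muf n r c u" by (simp add: muf_def sum_negf)
  qed
  have m: "\<forall>u>0. 1 * u \<le> ttf n r c u"
  proof (intro allI impI)
    fix u :: real assume u: "0 < u"
    have "0 \<le> (\<Sum>i\<in>{1..n}. - c i / ((- r i) * sqrt (u\<^sup>2 - r i)))"
      by (intro sum_nonneg t3)
    then have "0 \<le> - (\<Sum>i\<in>{1..n}. c i / ((- r i) * sqrt (u\<^sup>2 - r i)))"
      by (simp add: sum_negf)
    then show "1 * u \<le> ttf n r c u" unfolding tt_alt using u
      by (simp add: mult_le_cancel_left1)
  qed
  have M: "\<forall>u>0. ttf n r c u \<le> (1 + K) * u"
  proof (intro allI impI)
    fix u :: real assume u: "0 < u"
    have "(\<Sum>i\<in>{1..n}. - c i / ((- r i) * sqrt (u\<^sup>2 - r i))) \<le> K"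
      unfolding K_def by (intro sum_mono t2)
    then have "1 - (\<Sum>i\<in>{1..n}. c i / ((- r i) * sqrt (u\<^sup>2 - r i))) \<le> 1 + K"
      by (simp add: sum_negf)
    then show "ttf n r c u \<le> (1 + K) * u" unfolding tt_alt using u
      by (simp add: mult.commute mult_left_mono)
  qed
  show ?thesis using general_gd[OF neg mupos _ m M] by simp
qed


lemma powr32: "(r::real) < 0 \<Longrightarrow> \<bar>r\<bar> powr (3/2) = (- r) * sqrt (- r)"
proof -
  assume r: "r < 0"
  have "\<bar>r\<bar> = - r" using r by simp
  moreover have "(- r) powr (3/2) = (- r) powr 1 * (- r) powr (1/2)"
  proof -
    have e: "(3/2::real) = 1 + 1/2" by simp
    show ?thesis by (simp only: e powr_add)
  qed
  moreover have "(- r) powr 1 = - r" using r by simp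
  moreover have "(- r) powr (1/2) = sqrt (- r)" using r by (simp add: powr_half_sqrt)
  ultimately show ?thesis by simp
qed

theorem proposition28:
  fixes n :: nat and r \<xi> :: "nat \<Rightarrow> real"
  assumes "n \<ge> 2"
    and "inj_on r {1..n}"
  shows "((\<forall>i\<in>{2..n}. r i < r 1) \<and> r 1 < -1 \<and> (\<forall>i\<in>{2..n}. \<xi> i > 0)
           \<and> 1 / \<bar>r 1\<bar> powr (3/2) + (\<Sum>i\<in>{2..n}. \<xi> i / \<bar>r i\<bar> powr (3/2)) < 1
          \<longrightarrow> globally_defined 1 n r (\<lambda>i. if i = 1 then 1 else \<xi> i))
       \<and> ((\<forall>i\<in>{2..n}. r i < r 1) \<and> r 1 < 0 \<and> (\<forall>i\<in>{2..n}. \<xi> i > 0)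
          \<longrightarrow> globally_defined 1 n r (\<lambda>i. if i = 1 then -1 else - \<xi> i))"
proof (intro conjI impI)
  have split: "{1..n} = insert 1 {2..n}" using assms(1) by auto
  have n1: "1 \<notin> {2..n::nat}" by simp
  {
    assume H: "(\<forall>i\<in>{2..n}. r i < r 1) \<and> r 1 < -1 \<and> (\<forall>i\<in>{2..n}. \<xi> i > 0)
           \<and> 1 / \<bar>r 1\<bar> powr (3/2) + (\<Sum>i\<in>{2..n}. \<xi> i / \<bar>r i\<bar> powr (3/2)) < 1"
    define c where "c = (\<lambda>i. if i = 1 then 1 else \<xi> i)"
    have neg: "\<forall>i\<in>{1..n}. r i < 0"
    proof
      fix i assume "i \<in> {1..n}"
      then have "i = 1 \<or> i \<in> {2..n}" by auto
      then show "r i < 0"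
      proof
        assume "i = 1" then show ?thesis using H by simp
      next
        assume "i \<in> {2..n}" then have "r i < r 1" using H by blast
        then show ?thesis using H by linarith
      qed
    qed
    have cpos: "\<forall>i\<in>{1..n}. 0 < c i"
    proof
      fix i assume "i \<in> {1..n}"
      then have "i = 1 \<or> i \<in> {2..n}" by auto
      then show "0 < c i" using H by (force simp: c_def)
    qed
    have eqK: "(\<Sum>i\<in>{1..n}. c i / ((- r i) * sqrt (- r i)))
        = 1 / \<bar>r 1\<bar> powr (3/2) + (\<Sum>i\<in>{2..n}. \<xi> i / \<bar>r i\<bar> powr (3/2))"
    proof -
      have "(\<Sum>i\<in>{1..n}. c i / ((- r i) * sqrt (- r i)))
          = c 1 / ((- r 1) * sqrt (- r 1)) + (\<Sum>i\<in>{2..n}. c i / ((- r i) * sqrt (- r i)))"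
        unfolding split by (simp add: n1)
      also have "(\<Sum>i\<in>{2..n}. c i / ((- r i) * sqrt (- r i))) = (\<Sum>i\<in>{2..n}. \<xi> i / \<bar>r i\<bar> powr (3/2))"
      proof (rule sum.cong)
        fix i assume i: "i \<in> {2..n}"
        then have "r i < 0" using neg by auto
        then have p: "\<bar>r i\<bar> powr (3/2) = (- r i) * sqrt (- r i)" by (rule powr32)
        have "c i = \<xi> i" using i by (simp add: c_def)
        then show "c i / ((- r i) * sqrt (- r i)) = \<xi> i / \<bar>r i\<bar> powr (3/2)"
          by (simp only: p)
      qed simp
      also have "c 1 / ((- r 1) * sqrt (- r 1)) = 1 / \<bar>r 1\<bar> powr (3/2)"
      proof -
        have "r 1 < 0" using H by simp
        then have p: "\<bar>r 1\<bar> powr (3/2) = (- r 1) * sqrt (- r 1)" by (rule powr32)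
        have "c 1 = 1" by (simp add: c_def)
        then show ?thesis by (simp only: p)
      qed
      finally show ?thesis .
    qed
    have lt: "1 / \<bar>r 1\<bar> powr (3/2) + (\<Sum>i\<in>{2..n}. \<xi> i / \<bar>r i\<bar> powr (3/2)) < 1"
      using H by blast
    have K: "(\<Sum>i\<in>{1..n}. c i / ((- r i) * sqrt (- r i))) < 1" unfolding eqK by (rule lt)
    have "globally_defined 1 n r c" by (rule pos_case[OF neg cpos K])
    then show "globally_defined 1 n r (\<lambda>i. if i = 1 then 1 else \<xi> i)" by (simp add: c_def)
  }
  {
    assume H: "(\<forall>i\<in>{2..n}. r i < r 1) \<and> r 1 < 0 \<and> (\<forall>i\<in>{2..n}. \<xi> i > 0)"
    define c where "c = (\<lambda>i. if i = 1 then -1 else - \<xi> i)"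
    have neg: "\<forall>i\<in>{1..n}. r i < 0"
    proof
      fix i assume "i \<in> {1..n}"
      then have "i = 1 \<or> i \<in> {2..n}" by auto
      then show "r i < 0"
      proof
        assume "i = 1" then show ?thesis using H by simp
      next
        assume "i \<in> {2..n}" then have "r i < r 1" using H by blast
        then show ?thesis using H by linarith
      qed
    qed
    have cneg: "\<forall>i\<in>{1..n}. c i < 0"
    proof
      fix i assume "i \<in> {1..n}"
      then have "i = 1 \<or> i \<in> {2..n}" by auto
      then show "c i < 0" using H by (force simp: c_def)
    qed
    have "globally_defined 1 n r c" by (rule neg_case[OF neg cneg])
    then show "globally_defined 1 n r (\<lambda>i. if i = 1 then -1 else - \<xi> i)" by (simp add: c_def)
  }
qed

end
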